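(* Let $\mathbb{A}$ be a reduced medial algebra of dimension at least $2$ over a field of characteristic not $2,3$. If $c_1$ is a semi-simple nonzero idempotent, then for any nonzero idempotent $c_2$ the idempotent $c_1c_2$ is also semi-simple and $\operatorname{spec}(c_1)=\operatorname{spec}(c_1c_2)$.
   Context: All algebras commutative, possibly nonassociative, finite-dimensional. Medial: $(xy)(zw)=(xz)(yw)$ identically. Reduced: $\ker L_c=0$ for every nonzero idempotent $c$, where $L_c:x\mapsto cx$. $\operatorname{spec}(c)$ is the multiset of roots of the characteristic polynomial of $L_c$. An idempotent $c$ is semi-simple if $\mathbb{A}$ is the direct sum of the eigenspaces of $L_c$. *)

theory Defs
  imports "HOL-Analysis.Analysis" "HOL-Computational_Algebra.Polynomial"
begin

text \<open>A finite-dimensional commutative (possibly nonassociative) algebra over a field 'k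
  is modelled on the coordinate space 'k^'n (dimension CARD('n)) with a multiplication
  mul that is bilinear.\<close>

definition alg_bilinear :: "('k::field^'n \<Rightarrow> 'k^'n \<Rightarrow> 'k^'n) \<Rightarrow> bool" where
  "alg_bilinear mul \<longleftrightarrow>
     (\<forall>x. Vector_Spaces.linear (*s) (*s) (mul x)) \<and>
     (\<forall>y. Vector_Spaces.linear (*s) (*s) (\<lambda>x. mul x y))"

definition alg_commutative :: "('v \<Rightarrow> 'v \<Rightarrow> 'v) \<Rightarrow> bool" where
  "alg_commutative mul \<longleftrightarrow> (\<forall>x y. mul x y = mul y x)"

definition medial :: "('v \<Rightarrow> 'v \<Rightarrow> 'v) \<Rightarrow> bool" where
  "medial mul \<longleftrightarrow> (\<forall>x y z w. mul (mul x y) (mul z w) = mul (mul x z) (mul y w))"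

definition idempotent :: "('v \<Rightarrow> 'v \<Rightarrow> 'v) \<Rightarrow> 'v \<Rightarrow> bool" where
  "idempotent mul c \<longleftrightarrow> mul c c = c"

text \<open>Reduced: L_c has trivial kernel for every nonzero idempotent c.\<close>
definition reduced_alg :: "('v::zero \<Rightarrow> 'v \<Rightarrow> 'v) \<Rightarrow> bool" where
  "reduced_alg mul \<longleftrightarrow>
     (\<forall>c. c \<noteq> 0 \<and> idempotent mul c \<longrightarrow> (\<forall>x. mul c x = 0 \<longrightarrow> x = 0))"

text \<open>Eigenspace of L_c for the eigenvalue (candidate) lam.\<close>
definition eigenspace_L :: "('k::field^'n \<Rightarrow> 'k^'n \<Rightarrow> 'k^'n) \<Rightarrow> 'k^'n \<Rightarrow> 'k \<Rightarrow> ('k^'n) set" where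
  "eigenspace_L mul c lam = {x. mul c x = lam *s x}"

text \<open>Semi-simple idempotent: the algebra is the (internal) direct sum of the eigenspaces
  of L_c, i.e. every element decomposes uniquely as a finite sum of elements of the
  eigenspaces.\<close>
definition semisimple_idem :: "('k::field^'n \<Rightarrow> 'k^'n \<Rightarrow> 'k^'n) \<Rightarrow> 'k^'n \<Rightarrow> bool" where
  "semisimple_idem mul c \<longleftrightarrow> idempotent mul c \<and>
     (\<forall>x. \<exists>!f. finite {lam. f lam \<noteq> 0} \<and>
                (\<forall>lam. f lam \<in> eigenspace_L mul c lam) \<and>
                x = (\<Sum>lam\<in>{lam. f lam \<noteq> 0}. f lam))"

text \<open>Characteristic polynomial of a square matrix, det(X I - A).\<close>
definition charpoly :: "'k::comm_ring_1^'n^'n \<Rightarrow> 'k poly" where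
  "charpoly A = det (\<chi> i j. (if i = j then [:0, 1:] else 0) - [:A $ i $ j:])"

text \<open>spec(c): multiset of roots of the characteristic polynomial of L_c.\<close>
definition spec :: "('k::field^'n \<Rightarrow> 'k^'n \<Rightarrow> 'k^'n) \<Rightarrow> 'k^'n \<Rightarrow> 'k multiset" where
  "spec mul c = proots (charpoly (matrix (mul c)))"

end

theory Submission imports Defs begin

definition liftm :: "'k::comm_ring_1^'n^'m \<Rightarrow> 'k poly^'n^'m" where
  "liftm M = (\<chi> i j. [:M$i$j:])"

lemma pCons_sum: "[:sum f S:] = (\<Sum>k\<in>S. [:f k:])"
proof (induct S rule: infinite_finite_induct)
  case (insert x F)
  have "[:f x + sum f F:] = [:f x:] + [:sum f F:]" by simp
  with insert show ?case by simp
qed simp_all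

lemma pCons_mult: "[:(a::'k::comm_ring_1) * b:] = [:a:] * [:b:]"
  by simp

lemma liftm_mult: "liftm (A ** B) = liftm A ** liftm B"
  by (simp add: liftm_def vec_eq_iff matrix_matrix_mult_def pCons_sum ac_simps)

lemma liftm_one: "liftm (mat 1) = mat 1"
  by (simp add: liftm_def vec_eq_iff mat_def)

definition XI :: "'k::comm_ring_1 poly^'n^'n" where
  "XI = (\<chi> i j. if i = j then [:0, 1:] else 0)"

lemma XI_comm: "XI ** M = M ** XI"
  by (simp add: XI_def vec_eq_iff matrix_matrix_mult_def if_distrib if_distribR mult.commute cong: if_cong)

lemma mm_diff_r: "(A - B) ** C = A ** C - B ** (C::'a::comm_ring_1^'n^'n)"
  by (simp add: vec_eq_iff matrix_matrix_mult_def algebra_simps sum_subtractf)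

lemma mm_diff_l: "C ** (A - B) = C ** A - C ** (B::'a::comm_ring_1^'n^'n)"
  by (simp add: vec_eq_iff matrix_matrix_mult_def algebra_simps sum_subtractf)

lemma charpoly_XI: "charpoly A = det (XI - liftm A)"
  unfolding charpoly_def XI_def liftm_def by (rule arg_cong[where f=det]) (simp add: vec_eq_iff)

lemma charpoly_sim:
  fixes A C P Q :: "'k::field^'n^'n"
  assumes "C ** P = P ** A" "Q ** P = mat 1"
  shows "charpoly C = charpoly A"
proof -
  have e: "(XI - liftm C) ** liftm P = liftm P ** (XI - liftm A)"
    by (simp add: mm_diff_r mm_diff_l XI_comm liftm_mult[symmetric] assms(1))
  have "det (liftm Q) * det (liftm P) = 1"
    by (metis det_mul liftm_mult assms(2) liftm_one det_I)
  hence nz: "det (liftm P) \<noteq> 0" by auto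
  from arg_cong[OF e, of det] have "det (XI - liftm C) * det (liftm P) = det (liftm P) * det (XI - liftm A)"
    by (simp add: det_mul)
  with nz show ?thesis by (simp add: charpoly_XI mult.commute)
qed
lemma my_ex1_unique: "\<exists>!x. P x \<Longrightarrow> P a \<Longrightarrow> P b \<Longrightarrow> a = b"
  by blast

lemma semisimple_transfer:
  fixes L L' T :: "'k::field^'n \<Rightarrow> 'k^'n"
  assumes lin: "Vector_Spaces.linear (*s) (*s) T" and bij: "bij T"
    and comm: "\<And>y. L' (T y) = T (L y)"
    and ss: "\<forall>x. \<exists>!f. finite {lam. f lam \<noteq> 0} \<and> (\<forall>lam. L (f lam) = lam *s f lam) \<and>
                x = (\<Sum>lam\<in>{lam. f lam \<noteq> 0}. f lam)"
  shows "\<forall>x. \<exists>!f. finite {lam. f lam \<noteq> 0} \<and> (\<forall>lam. L' (f lam) = lam *s f lam) \<and>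
                x = (\<Sum>lam\<in>{lam. f lam \<noteq> 0}. f lam)"
proof
  fix x
  define Ti where "Ti = inv T"
  have TTi: "T (Ti y) = y" for y using bij unfolding Ti_def by (simp add: bij_is_surj surj_f_inv_f)
  have TiT: "Ti (T y) = y" for y using bij unfolding Ti_def by (simp add: bij_is_inj)
  have inj: "T a = T b \<Longrightarrow> a = b" for a b by (metis TiT)
  have T0: "T 0 = 0" using lin by (rule vec.linear_0)
  have Tz: "T y = 0 \<longleftrightarrow> y = 0" for y using T0 inj by metis
  have Tiz: "Ti y = 0 \<longleftrightarrow> y = 0" for y by (metis TTi TiT T0)
  have Tsc: "T (a *s y) = a *s T y" for a y using lin by (rule vec.linear_scale)
  have Tsum: "T (sum g S) = (\<Sum>i\<in>S. T (g i))" for g and S :: "'k set"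
    using lin by (rule vec.linear_sum)
  have eig: "L' y = lam *s y \<longleftrightarrow> L (Ti y) = lam *s Ti y" for y lam
  proof -
    have "L' y = T (L (Ti y))" by (metis comm TTi)
    moreover have "lam *s y = T (lam *s Ti y)" by (simp add: Tsc TTi)
    ultimately show ?thesis using inj by metis
  qed
  let ?P = "\<lambda>L f z. finite {lam. f lam \<noteq> 0} \<and> (\<forall>lam. L (f lam) = lam *s f lam) \<and>
                z = (\<Sum>lam\<in>{lam. f lam \<noteq> 0}. f lam)"
  show "\<exists>!f. ?P L' f x"
  proof (rule ex_ex1I)
    obtain f where f1: "finite {lam. f lam \<noteq> 0}" and f2: "\<And>lam. L (f lam) = lam *s f lam"
      and f3: "Ti x = (\<Sum>lam\<in>{lam. f lam \<noteq> 0}. f lam)" using ss by blast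
    have S: "{lam. T (f lam) \<noteq> 0} = {lam. f lam \<noteq> 0}" by (simp add: Tz)
    have "?P L' (\<lambda>lam. T (f lam)) x"
    proof (intro conjI allI)
      show "finite {lam. T (f lam) \<noteq> 0}" using f1 S by simp
      fix lam show "L' (T (f lam)) = lam *s T (f lam)" using f2 by (simp add: comm Tsc)
    next
      have "x = T (Ti x)" by (simp add: TTi)
      also have "\<dots> = (\<Sum>lam\<in>{lam. f lam \<noteq> 0}. T (f lam))" unfolding f3 by (rule Tsum)
      finally show "x = (\<Sum>lam\<in>{lam. T (f lam) \<noteq> 0}. T (f lam))" using S by simp
    qed
    then show "\<exists>f. ?P L' f x" by (rule exI[where x="\<lambda>lam. T (f lam)"])
  next
    fix g1 g2 assume g1: "?P L' g1 x" and g2: "?P L' g2 x"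
    have bk: "?P L (\<lambda>lam. Ti (g lam)) (Ti x)" if g: "?P L' g x" for g
    proof -
      have S: "{lam. Ti (g lam) \<noteq> 0} = {lam. g lam \<noteq> 0}" by (simp add: Tiz)
      from g have gx: "x = (\<Sum>lam\<in>{lam. g lam \<noteq> 0}. g lam)" by (simp only:)
      have "T (\<Sum>lam\<in>{lam. g lam \<noteq> 0}. Ti (g lam)) = (\<Sum>lam\<in>{lam. g lam \<noteq> 0}. g lam)"
        by (simp only: Tsum TTi)
      hence "T (\<Sum>lam\<in>{lam. g lam \<noteq> 0}. Ti (g lam)) = x" using gx by simp
      hence e3: "Ti x = (\<Sum>lam\<in>{lam. Ti (g lam) \<noteq> 0}. Ti (g lam))" unfolding S by (metis TiT)
      from g have e1: "finite {lam. Ti (g lam) \<noteq> 0}" unfolding S by (simp only:)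
      have e2: "L (Ti (g lam)) = lam *s Ti (g lam)" for lam
        using g eig[of "g lam" lam] by simp
      show ?thesis using e1 e2 e3 by (intro conjI allI)
    qed
    have u: "\<exists>!f. ?P L f (Ti x)" using ss by (rule spec)
    have "(\<lambda>lam. Ti (g1 lam)) = (\<lambda>lam. Ti (g2 lam))"
      using u bk[OF g1] bk[OF g2] by (rule my_ex1_unique[where P="\<lambda>f. ?P L f (Ti x)"])
    show "g1 = g2"
    proof
      fix lam
      from arg_cong[OF \<open>(\<lambda>lam. Ti (g1 lam)) = (\<lambda>lam. Ti (g2 lam))\<close>, of "\<lambda>h. T (h lam)"]
      show "g1 lam = g2 lam" by (simp add: TTi)
    qed
  qed
qed

theorem proposition4p3:
  fixes mul :: "'k::field^'n \<Rightarrow> 'k^'n \<Rightarrow> 'k^'n"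
    and c1 c2 :: "'k^'n"
  assumes char2: "(2::'k) \<noteq> 0"
    and char3: "(3::'k) \<noteq> 0"
    and dim: "CARD('n) \<ge> 2"
    and bil: "alg_bilinear mul"
    and comm: "alg_commutative mul"
    and med: "medial mul"
    and red: "reduced_alg mul"
    and c1_ss: "semisimple_idem mul c1"
    and c1_nz: "c1 \<noteq> 0"
    and c2_idem: "idempotent mul c2"
    and c2_nz: "c2 \<noteq> 0"
  shows "semisimple_idem mul (mul c1 c2) \<and> spec mul c1 = spec mul (mul c1 c2)"
proof -
  have bilr: "Vector_Spaces.linear (*s) (*s) (mul x)" for x using bil by (simp add: alg_bilinear_def)
  have cm: "mul x y = mul y x" for x y using comm by (simp add: alg_commutative_def)
  have mm: "mul (mul x y) (mul z w) = mul (mul x z) (mul y w)" for x y z w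
    using med by (simp add: medial_def)
  have c1i: "mul c1 c1 = c1" using c1_ss by (simp add: semisimple_idem_def idempotent_def)
  have c2i: "mul c2 c2 = c2" using c2_idem by (simp add: idempotent_def)
  have redc2: "mul c2 x = 0 \<Longrightarrow> x = 0" for x using red c2_idem c2_nz unfolding reduced_alg_def by blast
  have inj: "inj (mul c2)"
  proof (rule injI)
    fix x y assume "mul c2 x = mul c2 y"
    hence "mul c2 (x - y) = 0" using vec.linear_diff[OF bilr[of c2]] by simp
    thus "x = y" using redc2[of "x - y"] by simp
  qed
  have surj: "surj (mul c2)" using vec.linear_inj_imp_surj[OF bilr inj] .
  have bij: "bij (mul c2)" using inj surj by (simp add: bij_def)
  have commu: "mul (mul c1 c2) (mul c2 y) = mul c2 (mul c1 y)" for y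
  proof -
    have "mul (mul c1 c2) (mul c2 y) = mul (mul c1 c2) (mul y c2)" by (simp add: cm[of c2 y])
    also have "\<dots> = mul (mul c1 y) (mul c2 c2)" by (rule mm)
    also have "\<dots> = mul (mul c1 y) c2" by (simp only: c2i)
    also have "\<dots> = mul c2 (mul c1 y)" by (rule cm)
    finally show ?thesis .
  qed
  have idc: "idempotent mul (mul c1 c2)"
    unfolding idempotent_def using mm[of c1 c2 c1 c2] c1i c2i cm[of c2 c1] by simp
  have ss1: "\<forall>x. \<exists>!f. finite {lam. f lam \<noteq> 0} \<and> (\<forall>lam. mul c1 (f lam) = lam *s f lam) \<and>
                x = (\<Sum>lam\<in>{lam. f lam \<noteq> 0}. f lam)"
    using c1_ss by (simp add: semisimple_idem_def eigenspace_L_def)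
  have ss: "semisimple_idem mul (mul c1 c2)"
    using semisimple_transfer[OF bilr bij commu ss1] idc
    by (simp add: semisimple_idem_def eigenspace_L_def)
  obtain g where g: "Vector_Spaces.linear (*s) (*s) g" "g \<circ> mul c2 = id"
    using vec.linear_injective_left_inverse[OF bilr inj] by blast
  have Q: "matrix g ** matrix (mul c2) = mat 1"
    by (simp only: matrix_compose_gen[OF bilr g(1), symmetric] g(2) matrix_id_mat_1)
  have "mul (mul c1 c2) \<circ> mul c2 = mul c2 \<circ> mul c1" using commu by (simp add: fun_eq_iff)
  hence C: "matrix (mul (mul c1 c2)) ** matrix (mul c2) = matrix (mul c2) ** matrix (mul c1)"
    by (simp only: matrix_compose_gen[OF bilr bilr, symmetric])
  have "charpoly (matrix (mul (mul c1 c2))) = charpoly (matrix (mul c1))"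
    by (rule charpoly_sim[OF C Q])
  with ss show ?thesis by (simp add: spec_def)
qed

end
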